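(* Let $\mathcal{M}\subset\mathbb{R}^d$ be a Riemannian manifold, let $\mathcal{Z}=\mathcal{Z}_1\times\dots\times\mathcal{Z}_s$ be a Cartesian product of finite nonempty sets, and let $\{\mathbf{u}_z \mid z\in\mathcal{Z}\}\subset\mathcal{M}$ be a geodesically decomposable set of embeddings with intrinsic mean $\mu$. Then there exist unique vectors $\mathbf{v}_{z_i}\in T_\mu\mathcal{M}$, one for each $z_i\in\mathcal{Z}_i$ and each $i=1,\dots,s$, such that $\sum_{z_i\in\mathcal{Z}_i}\mathbf{v}_{z_i}=0$ for all $i=1,\dots,s$ and $$\mathbf{u}_z=\mathrm{Exp}_\mu(\mathbf{v}_{z_1}+\dots+\mathbf{v}_{z_s})\quad\text{for all } z=(z_1,\dots,z_s)\in\mathcal{Z}.$$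
   Context: $\mathcal{M}$ has intrinsic (geodesic) distance $d_\mathcal{M}$. For $\mu\in\mathcal{M}$, $T_\mu\mathcal{M}$ is the tangent space, $\mathrm{Exp}_\mu:T_\mu\mathcal{M}\to\mathcal{M}$ the exponential map ($\mathrm{Exp}_\mu(\mathbf{v})=\gamma_\mathbf{v}(1)$ for the geodesic $\gamma_\mathbf{v}$ with $\gamma_\mathbf{v}(0)=\mu$, $\dot\gamma_\mathbf{v}(0)=\mathbf{v}$), and $\mathrm{Log}_\mu=\mathrm{Exp}_\mu^{-1}$ its (local) inverse. Given points $\mathbf{u}_1,\dots,\mathbf{u}_N\in\mathcal{M}$ and weights $w_i\ge 0$ with $\sum_i w_i=1$, the (weighted) intrinsic mean is $\mu=\arg\min_{\mathbf{u}\in\mathcal{M}}\sum_i w_i\, d_\mathcal{M}(\mathbf{u},\mathbf{u}_i)^2$ (unweighted: $w_i=1/N$). Standing assumption of the paper: the intrinsic mean exists, is unique, the logarithmic map is defined at the relevant points, and $\mu$ satisfies the centering property $\sum_i w_i\,\mathrm{Log}_\mu(\mathbf{u}_i)=0$. Definition: a set $\{\mathbf{u}_z\mid z\in\mathcal{Z}\}\subset\mathcal{M}$ with intrinsic mean $\mu$ is geodesically decomposable if there exist vectors $\mathbf{v}_{z_i}\in T_\mu\mathcal{M}$ for all $z_i\in\mathcal{Z}_i$ ($i=1,\dots,s$) such that $\mathbf{u}_z=\mathrm{Exp}_\mu(\mathbf{v}_{z_1}+\dots+\mathbf{v}_{z_s})$ for all $z=(z_1,\dots,z_s)\in\mathcal{Z}$.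 *)

theory Defs
  imports "HOL-Analysis.Analysis"
begin

text \<open>Index set Z = Z_0 x ... x Z_(s-1), represented as functions z on {..<s}
 with z i in Z i (extensional, PiE).\<close>

definition index_product :: "nat \<Rightarrow> (nat \<Rightarrow> 'a set) \<Rightarrow> (nat \<Rightarrow> 'a) set" where
  "index_product s Z = PiE {..<s} Z"

definition is_intrinsic_mean ::
  "'p set \<Rightarrow> ('p \<Rightarrow> 'p \<Rightarrow> real) \<Rightarrow> 'i set \<Rightarrow> ('i \<Rightarrow> real) \<Rightarrow> ('i \<Rightarrow> 'p) \<Rightarrow> 'p \<Rightarrow> bool" where
  "is_intrinsic_mean M dM I w u mu \<longleftrightarrow>
     mu \<in> M \<and> (\<forall>x\<in>M. (\<Sum>z\<in>I. w z * (dM mu (u z))\<^sup>2) \<le> (\<Sum>z\<in>I. w z * (dM x (u z))\<^sup>2))"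

text \<open>Geodesic decomposability w.r.t. the exponential map Exp (at mu) with tangent space T.\<close>
definition geodesically_decomposable ::
  "('v::comm_monoid_add) set \<Rightarrow> ('v \<Rightarrow> 'p) \<Rightarrow> nat \<Rightarrow> (nat \<Rightarrow> 'a set) \<Rightarrow> ((nat \<Rightarrow> 'a) \<Rightarrow> 'p) \<Rightarrow> bool" where
  "geodesically_decomposable T Exp s Z u \<longleftrightarrow>
     (\<exists>v :: nat \<Rightarrow> 'a \<Rightarrow> 'v.
        (\<forall>i<s. \<forall>a\<in>Z i. v i a \<in> T) \<and>
        (\<forall>z\<in>index_product s Z. u z = Exp (\<Sum>i<s. v i (z i))))"

end

theory Submission
  imports Defs
begin

lemma sum_PiE_coord:
  fixes g :: "'a \<Rightarrow> real ^ 'd"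
  assumes I: "finite I" and fz: "\<forall>j\<in>I. finite (Z j)" and i: "i \<in> I"
  shows "(\<Sum>z\<in>PiE I Z. g (z i)) = (\<Prod>j\<in>I-{i}. real (card (Z j))) *\<^sub>R (\<Sum>a\<in>Z i. g a)"
proof (rule vec_eq_iff[THEN iffD2, rule_format])
  fix k
  have "(\<Sum>z\<in>PiE I Z. g (z i)) $ k = (\<Sum>z\<in>PiE I Z. \<Prod>j\<in>I. (if j = i then g (z j) $ k else 1))"
    by (simp add:  prod.delta[OF I] i)
  also have "\<dots> = (\<Prod>j\<in>I. \<Sum>b\<in>Z j. (if j = i then g b $ k else 1))"
    by (rule prod_sum_PiE[symmetric]) (use I fz in auto)
  also have "\<dots> = (\<Sum>b\<in>Z i. g b $ k) * (\<Prod>j\<in>I-{i}. \<Sum>b\<in>Z j. (if j = i then g b $ k else 1))"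
    using I i by (simp add: prod.remove)
  also have "(\<Prod>j\<in>I-{i}. \<Sum>b\<in>Z j. (if j = i then g b $ k else 1)) = (\<Prod>j\<in>I-{i}. real (card (Z j)))"
    by (rule prod.cong) auto
  finally show "(\<Sum>z\<in>PiE I Z. g (z i)) $ k = ((\<Prod>j\<in>I-{i}. real (card (Z j))) *\<^sub>R (\<Sum>a\<in>Z i. g a)) $ k"
    by (simp add:  mult.commute)
qed


theorem lemma1:
  fixes M :: "(real ^ 'd) set"
    and dM :: "real ^ 'd \<Rightarrow> real ^ 'd \<Rightarrow> real"
    and T :: "(real ^ 'd) set"
    and mu :: "real ^ 'd"
    and Exp :: "real ^ 'd \<Rightarrow> real ^ 'd"
    and Log :: "real ^ 'd \<Rightarrow> real ^ 'd"
    and s :: nat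
    and Z :: "nat \<Rightarrow> 'a set"
    and u :: "(nat \<Rightarrow> 'a) \<Rightarrow> real ^ 'd"
  assumes tangent: "subspace T"
    and exp_in: "\<forall>v\<in>T. Exp v \<in> M"
    and log_exp: "\<forall>v\<in>T. Log (Exp v) = v"
    and fin: "\<forall>i<s. finite (Z i) \<and> Z i \<noteq> {}"
    and in_M: "\<forall>z\<in>index_product s Z. u z \<in> M"
    and mean: "is_intrinsic_mean M dM (index_product s Z)
                 (\<lambda>_. 1 / real (card (index_product s Z))) u mu"
    and centering: "(\<Sum>z\<in>index_product s Z. (1 / real (card (index_product s Z))) *\<^sub>R Log (u z)) = 0"
    and decomp: "geodesically_decomposable T Exp s Z u"
  shows "\<exists>v :: nat \<Rightarrow> 'a \<Rightarrow> real ^ 'd.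
           ((\<forall>i<s. \<forall>a\<in>Z i. v i a \<in> T) \<and>
            (\<forall>i<s. (\<Sum>a\<in>Z i. v i a) = 0) \<and>
            (\<forall>z\<in>index_product s Z. u z = Exp (\<Sum>i<s. v i (z i))))
         \<and> (\<forall>w :: nat \<Rightarrow> 'a \<Rightarrow> real ^ 'd.
              ((\<forall>i<s. \<forall>a\<in>Z i. w i a \<in> T) \<and>
               (\<forall>i<s. (\<Sum>a\<in>Z i. w i a) = 0) \<and>
               (\<forall>z\<in>index_product s Z. u z = Exp (\<Sum>i<s. w i (z i))))
              \<longrightarrow> (\<forall>i<s. \<forall>a\<in>Z i. w i a = v i a))"
  proof -
  let ?P = "index_product s Z"
  let ?I = "{..<s}::nat set"
  have fI: "finite ?I" by simp
  have fz: "\<forall>j\<in>?I. finite (Z j)" using fin by auto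
  have cpos: "\<And>j. j < s \<Longrightarrow> real (card (Z j)) > 0" using fin by (simp add: card_gt_0_iff)
  have cardP: "card ?P = (\<Prod>j\<in>?I. card (Z j))" unfolding index_product_def by (simp add: card_PiE)
  have Npos: "real (card ?P) > 0" unfolding cardP of_nat_prod using cpos by (auto intro: prod_pos)
  from decomp obtain v where vT: "\<forall>i<s. \<forall>a\<in>Z i. v i a \<in> T"
    and vu: "\<forall>z\<in>?P. u z = Exp (\<Sum>i<s. v i (z i))"
    unfolding geodesically_decomposable_def by blast
  have memP: "\<And>z i. z \<in> ?P \<Longrightarrow> i < s \<Longrightarrow> z i \<in> Z i" unfolding index_product_def by auto
  have sumT: "\<And>z f. z \<in> ?P \<Longrightarrow> (\<forall>i<s. \<forall>a\<in>Z i. f i a \<in> T) \<Longrightarrow> (\<Sum>i<s. f i (z i)) \<in> T"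
    by (rule subspace_sum[OF tangent]) (auto dest: memP)
  have logv: "\<And>z. z \<in> ?P \<Longrightarrow> Log (u z) = (\<Sum>i<s. v i (z i))"
    using vu log_exp sumT[OF _ vT] by auto
  have "(\<Sum>z\<in>?P. Log (u z)) = 0"
  proof -
    have "(1 / real (card ?P)) *\<^sub>R (\<Sum>z\<in>?P. Log (u z)) = 0"
      using centering by (simp add: scaleR_sum_right)
    then show ?thesis using Npos by simp
  qed
  then have "(\<Sum>z\<in>?P. \<Sum>i<s. v i (z i)) = 0" using logv by simp
  then have "(\<Sum>i<s. \<Sum>z\<in>?P. v i (z i)) = 0" by (subst sum.swap) simp
  moreover have "\<And>i. i < s \<Longrightarrow> (\<Sum>z\<in>?P. v i (z i)) = (\<Prod>j\<in>?I-{i}. real (card (Z j))) *\<^sub>R (\<Sum>a\<in>Z i. v i a)"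
    unfolding index_product_def by (rule sum_PiE_coord[OF fI fz]) simp
  moreover have "\<And>i. i < s \<Longrightarrow> (\<Prod>j\<in>?I-{i}. real (card (Z j))) = real (card ?P) / real (card (Z i))"
  proof -
    fix i assume i: "i < s"
    have "real (card ?P) = real (card (Z i)) * (\<Prod>j\<in>?I-{i}. real (card (Z j)))"
      unfolding cardP of_nat_prod using i by (simp add: prod.remove)
    then show "(\<Prod>j\<in>?I-{i}. real (card (Z j))) = real (card ?P) / real (card (Z i))"
      using cpos[OF i] by (simp add: field_simps)
  qed
  ultimately have "(\<Sum>i<s. (real (card ?P) / real (card (Z i))) *\<^sub>R (\<Sum>a\<in>Z i. v i a)) = 0"
    by simp
  then have "real (card ?P) *\<^sub>R (\<Sum>i<s. (1 / real (card (Z i))) *\<^sub>R (\<Sum>a\<in>Z i. v i a)) = 0"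
    by (simp add: scaleR_sum_right)
  then have msum: "(\<Sum>i<s. (1 / real (card (Z i))) *\<^sub>R (\<Sum>a\<in>Z i. v i a)) = 0"
    using Npos by simp
  define m where "m i = (1 / real (card (Z i))) *\<^sub>R (\<Sum>a\<in>Z i. v i a)" for i
  define v' where "v' i a = v i a - m i" for i a
  have mT: "m i \<in> T" if "i < s" for i
    unfolding m_def using vT that
    by (intro subspace_scale[OF tangent] subspace_sum[OF tangent]) auto
  have v'T: "\<forall>i<s. \<forall>a\<in>Z i. v' i a \<in> T"
    unfolding v'_def using vT mT by (auto intro: subspace_diff[OF tangent])
  have v'sum: "\<forall>i<s. (\<Sum>a\<in>Z i. v' i a) = 0"
  proof (intro allI impI)
    fix i assume i: "i < s"
    have "(\<Sum>a\<in>Z i. v' i a) = (\<Sum>a\<in>Z i. v i a) - real (card (Z i)) *\<^sub>R m i"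
      unfolding v'_def by (simp add: sum_subtractf scaleR_conv_of_real)
    also have "\<dots> = 0" unfolding m_def using cpos[OF i] by simp
    finally show "(\<Sum>a\<in>Z i. v' i a) = 0" .
  qed
  have v'eq: "(\<Sum>i<s. v' i (z i)) = (\<Sum>i<s. v i (z i))" for z
    unfolding v'_def using msum by (simp add: sum_subtractf m_def)
  have v'u: "\<forall>z\<in>?P. u z = Exp (\<Sum>i<s. v' i (z i))" using vu v'eq by simp
  have uniq: "\<forall>i<s. \<forall>a\<in>Z i. w i a = v' i a"
    if wT: "\<forall>i<s. \<forall>a\<in>Z i. w i a \<in> T" and wsum: "\<forall>i<s. (\<Sum>a\<in>Z i. w i a) = 0"
      and wu: "\<forall>z\<in>?P. u z = Exp (\<Sum>i<s. w i (z i))" for w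
  proof -
    define D where "D i a = w i a - v' i a" for i a
    have D0: "(\<Sum>i<s. D i (z i)) = 0" if z: "z \<in> ?P" for z
    proof -
      have "Log (u z) = (\<Sum>i<s. w i (z i))" using wu log_exp sumT[OF z wT] z by auto
      moreover have "Log (u z) = (\<Sum>i<s. v' i (z i))" using v'u log_exp sumT[OF z v'T] z by auto
      ultimately show ?thesis unfolding D_def by (simp add: sum_subtractf)
    qed
    have Dsum: "(\<Sum>a\<in>Z i. D i a) = 0" if "i < s" for i
      unfolding D_def using wsum v'sum that by (simp add: sum_subtractf)
    define c where "c i = (SOME x. x \<in> Z i)" for i
    have c: "c i \<in> Z i" if "i < s" for i unfolding c_def using fin that by (simp add: some_in_eq)
    have const: "D i a = D i b" if i: "i < s" and a: "a \<in> Z i" and b: "b \<in> Z i" for i a b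
    proof -
      define z where "z x = (\<lambda>j. if j < s then (if j = i then x else c j) else undefined)" for x
      have zP: "z x \<in> ?P" if "x \<in> Z i" for x
        unfolding index_product_def z_def using c that by (auto simp: PiE_iff extensional_def)
      have split: "(\<Sum>j<s. D j (z x j)) = D i x + (\<Sum>j\<in>?I-{i}. D j (c j))" for x
      proof -
        have "(\<Sum>j<s. D j (z x j)) = D j0 (z x j0) + (\<Sum>j\<in>?I-{j0}. D j (z x j))" if "j0 = i" for j0
          using i that by (simp add: sum.remove)
        moreover have "(\<Sum>j\<in>?I-{i}. D j (z x j)) = (\<Sum>j\<in>?I-{i}. D j (c j))"
          by (rule sum.cong) (auto simp: z_def)
        ultimately show ?thesis using i by (simp add: z_def)
      qed
      show ?thesis using D0[OF zP[OF a]] D0[OF zP[OF b]] split[of a] split[of b] by (metis add_right_cancel)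
    qed
    show ?thesis
    proof (intro allI impI ballI)
      fix i a assume i: "i < s" and a: "a \<in> Z i"
      have "(\<Sum>b\<in>Z i. D i b) = real (card (Z i)) *\<^sub>R D i a"
        using const[OF i a] by (simp add: sum_constant_scaleR[symmetric] cong: sum.cong)
      then have "D i a = 0" using Dsum[OF i] cpos[OF i] by simp
      then show "w i a = v' i a" unfolding D_def by simp
    qed
  qed
  show ?thesis using v'T v'sum v'u uniq by blast
qed

end
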